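(* Let $n\ge 1$ and let $f:\{0,1\}^n\to\{0,1\}^n$ be such that: (1) $G(f)$ has no circuit of length at least two; (2) every vertex of $G(f)$ with a positive loop also has a negative loop; (3) every vertex of $G(f)$ is reachable in $G(f)$ from a vertex with a negative loop. Then the asynchronous iteration graph $\Gamma(f)$ is strongly connected.
   Context: For $x\in\{0,1\}^n$ and $j\in\{1,\dots,n\}$, $\overline{x}^j$ denotes $x$ with its $j$-th component switched. The discrete Jacobian entries of $f=(f_1,\dots,f_n)$ are $f_{ij}(x)=\frac{f_i(\overline{x}^j)-f_i(x)}{\overline{x}^j_j-x_j}\in\{-1,0,1\}$. The interaction graph $G(f)$ is the signed directed graph on vertex set $\{1,\dots,n\}$ with an arc $(j,s,i)$ from $j$ to $i$ of sign $s\in\{-1,1\}$ whenever $f_{ij}(x)=s$ for some $x\in\{0,1\}^n$ (arcs of both signs between the same pair are allowed). A path is a sequence of arcs $(i_1,s_1,i_2),(i_2,s_2,i_3),\dots,(i_r,s_r,i_{r+1})$, of length $r$; $i_{r+1}$ is then reachable from $i_1$. It is a circuit if $i_{r+1}=i_1$ and $i_1,\dots,i_r$ are pairwise distinct. A vertex has a positive (resp. negative) loop if there is a positive (resp. negative) arc from it to itself. With $F_f(i,x)=(x_1,\dots,x_{i-1},f_i(x),x_{i+1},\dots,x_n)$, the asynchronous iteration graph $\Gamma(f)$ has vertex set $\{0,1\}^n$ and an arc from $x$ to $F_f(i,x)$ for every $x$ and every $i\in\{1,\dots,n\}$. *)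

theory Defs
  imports Main
begin

text \<open>Components are indexed by a finite type 'n (so n = CARD('n) \<ge> 1);
  a state x \<in> {0,1}^n is a function 'n \<Rightarrow> bool (True = 1, False = 0).\<close>

definition flip :: "('n \<Rightarrow> bool) \<Rightarrow> 'n \<Rightarrow> ('n \<Rightarrow> bool)" where
  "flip x j = x(j := \<not> x j)"

definition jac :: "(('n \<Rightarrow> bool) \<Rightarrow> ('n \<Rightarrow> bool)) \<Rightarrow> 'n \<Rightarrow> 'n \<Rightarrow> ('n \<Rightarrow> bool) \<Rightarrow> int" where
  "jac f i j x = (of_bool (f (flip x j) i) - of_bool (f x i)) div (of_bool (flip x j j) - of_bool (x j))"

definition ig_arc :: "(('n \<Rightarrow> bool) \<Rightarrow> ('n \<Rightarrow> bool)) \<Rightarrow> 'n \<Rightarrow> int \<Rightarrow> 'n \<Rightarrow> bool" where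
  "ig_arc f j s i \<longleftrightarrow> s \<in> {-1, 1} \<and> (\<exists>x. jac f i j x = s)"

definition has_circuit :: "(('n \<Rightarrow> bool) \<Rightarrow> ('n \<Rightarrow> bool)) \<Rightarrow> nat \<Rightarrow> bool" where
  "has_circuit f r \<longleftrightarrow> (\<exists>vs. length vs = r \<and> distinct vs \<and>
      (\<forall>k<r. \<exists>s. ig_arc f (vs ! k) s (vs ! ((k + 1) mod r))))"

definition ig_reachable :: "(('n \<Rightarrow> bool) \<Rightarrow> ('n \<Rightarrow> bool)) \<Rightarrow> 'n \<Rightarrow> 'n \<Rightarrow> bool" where
  "ig_reachable f j i \<longleftrightarrow> (\<lambda>a b. \<exists>s. ig_arc f a s b)\<^sup>+\<^sup>+ j i"

definition Fupd :: "(('n \<Rightarrow> bool) \<Rightarrow> ('n \<Rightarrow> bool)) \<Rightarrow> 'n \<Rightarrow> ('n \<Rightarrow> bool) \<Rightarrow> ('n \<Rightarrow> bool)" where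
  "Fupd f i x = x(i := f x i)"

definition async_arc :: "(('n \<Rightarrow> bool) \<Rightarrow> ('n \<Rightarrow> bool)) \<Rightarrow> ('n \<Rightarrow> bool) \<Rightarrow> ('n \<Rightarrow> bool) \<Rightarrow> bool" where
  "async_arc f x y \<longleftrightarrow> (\<exists>i. y = Fupd f i x)"

definition async_strongly_connected :: "(('n \<Rightarrow> bool) \<Rightarrow> ('n \<Rightarrow> bool)) \<Rightarrow> bool" where
  "async_strongly_connected f \<longleftrightarrow> (\<forall>x y. (async_arc f)\<^sup>*\<^sup>* x y)"

end

theory Submission
  imports Defs
begin

definition Rel :: "(('n \<Rightarrow> bool) \<Rightarrow> ('n \<Rightarrow> bool)) \<Rightarrow> ('n \<times> 'n) set" where
  "Rel f = {(a,b). a \<noteq> b \<and> (\<exists>s. ig_arc f a s b)}"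

definition closedS :: "(('n \<Rightarrow> bool) \<Rightarrow> ('n \<Rightarrow> bool)) \<Rightarrow> 'n set \<Rightarrow> bool" where
  "closedS f S \<longleftrightarrow> (\<forall>i\<in>S. \<forall>a. (a,i) \<in> Rel f \<longrightarrow> a \<in> S)"

definition stepS :: "(('n \<Rightarrow> bool) \<Rightarrow> ('n \<Rightarrow> bool)) \<Rightarrow> 'n set \<Rightarrow> ('n \<Rightarrow> bool) \<Rightarrow> ('n \<Rightarrow> bool) \<Rightarrow> bool" where
  "stepS f S x y \<longleftrightarrow> (\<exists>i\<in>S. y = Fupd f i x)"

lemma rtranclp_mono':
  assumes "\<And>x y. r x y \<Longrightarrow> s x y" and "r\<^sup>*\<^sup>* a b" shows "s\<^sup>*\<^sup>* a b"
  using assms(2)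
proof (induction rule: rtranclp_induct)
  case base then show ?case by simp
next
  case (step y z) show ?case using rtranclp.rtrancl_into_rtrancl[OF step(3) assms(1)[OF step(2)]] .
qed

lemma jac_val: "f (flip x j) i \<noteq> f x i \<Longrightarrow> jac f i j x \<in> {-1,1}"
  unfolding jac_def flip_def
  by (cases "x j"; cases "f (x(j := \<not> x j)) i"; cases "f x i") simp_all

lemma jac_arc: "f (flip x j) i \<noteq> f x i \<Longrightarrow> ig_arc f j (jac f i j x) i"
  unfolding ig_arc_def using jac_val[of f x j i] by blast
lemma no_loop_indep:
  assumes "\<not> ig_arc f n 1 n" "\<not> ig_arc f n (-1) n"
  shows "f (z(n:=True)) n = f (z(n:=False)) n"
proof (rule ccontr)
  assume h: "f (z(n:=True)) n \<noteq> f (z(n:=False)) n"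
  have e: "flip (z(n:=False)) n = z(n:=True)" unfolding flip_def by simp
  have h2: "f (flip (z(n:=False)) n) n \<noteq> f (z(n:=False)) n" using h unfolding e .
  have a: "ig_arc f n (jac f n n (z(n:=False))) n" using jac_arc[of f "z(n:=False)" n n, OF h2] .
  have "jac f n n (z(n:=False)) \<in> {-1,1}" using jac_val[of f "z(n:=False)" n n, OF h2] .
  then have "jac f n n (z(n:=False)) = -1 \<or> jac f n n (z(n:=False)) = 1" by blast
  then show False
  proof
    assume "jac f n n (z(n:=False)) = -1" then show False using a assms(2) by metis
  next
    assume "jac f n n (z(n:=False)) = 1" then show False using a assms(1) by metis
  qed
qed

lemma jac_loop: "jac f n n x = -1 \<Longrightarrow> f (x(n:=b)) n = (\<not> b)"
  unfolding jac_def flip_def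
  by (cases "x n"; cases b; cases "f (x(n := \<not> x n)) n"; cases "f x n") (auto simp: fun_upd_idem)

lemma dep:
  fixes x x' :: "'n::finite \<Rightarrow> bool"
  assumes "\<forall>a. x a \<noteq> x' a \<longrightarrow> (\<forall>s. \<not> ig_arc f a s i)"
  shows "f x i = f x' i"
  using assms
proof (induction "card {a. x a \<noteq> x' a}" arbitrary: x)
  case 0
  then have "{a. x a \<noteq> x' a} = {}" by simp
  then have "x = x'" by auto
  then show ?case by simp
next
  case (Suc m)
  have ne: "{a. x a \<noteq> x' a} \<noteq> {}" using Suc.hyps(2) by (metis card.empty nat.distinct(1))
  then obtain a where a: "x a \<noteq> x' a" by blast
  let ?x1 = "flip x a"
  have D: "{b. ?x1 b \<noteq> x' b} = {b. x b \<noteq> x' b} - {a}" using a unfolding flip_def by auto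
  have "card {b. ?x1 b \<noteq> x' b} = m" using Suc.hyps(2) a unfolding D by simp
  moreover have "\<forall>b. ?x1 b \<noteq> x' b \<longrightarrow> (\<forall>s. \<not> ig_arc f b s i)" using Suc.prems D by auto
  ultimately have "f ?x1 i = f x' i" using Suc.hyps(1)[of ?x1] by blast
  moreover have "f ?x1 i = f x i" using jac_arc[of f x a i] Suc.prems a by blast
  ultimately show ?case by simp
qed

lemma acyc:
  assumes no_circuit: "\<forall>r\<ge>2. \<not> has_circuit f r"
  shows "acyclic (Rel f)"
  unfolding acyclic_def
proof (intro allI notI)
  fix x assume "(x,x) \<in> (Rel f)\<^sup>+"
  then obtain m where "m>0" "(x,x) \<in> Rel f ^^ m" using trancl_power by blast
  then have ex: "\<exists>m g. 0<m \<and> g 0 = g m \<and> (\<forall>i<m. (g i, g (Suc i)) \<in> Rel f)"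
    using relpow_fun_conv by metis
  define P where "P m \<longleftrightarrow> (\<exists>g. 0<m \<and> g 0 = g m \<and> (\<forall>i<m. (g i, g (Suc i)) \<in> Rel f))" for m
  from ex have "\<exists>m. P m" unfolding P_def by blast
  then obtain m where Pm: "P m" and minl: "\<forall>k<m. \<not> P k" using exists_least_iff[of P] by blast
  then obtain g where g: "0<m" "g 0 = g m" "\<forall>i<m. (g i, g (Suc i)) \<in> Rel f" unfolding P_def by blast
  have m2: "m \<ge> 2"
  proof (rule ccontr)
    assume "\<not> m \<ge> 2" then have "m = 1" using g by auto
    then show False using g unfolding Rel_def by auto
  qed
  have neq: "g p \<noteq> g q" if "p < q" "q < m" for p q
  proof
    assume e: "g p = g q"
    have "P (q - p)" unfolding P_def
      apply (rule exI[of _ "\<lambda>i. g (p+i)"])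
      using that e g by auto
    then show False using minl that by auto
  qed
  have inj: "inj_on g {0..<m}"
    unfolding inj_on_def by (metis atLeastLessThan_iff linorder_neqE_nat neq)
  have h1: "length (map g [0..<m]) = m" by simp
  have h2: "distinct (map g [0..<m])" using inj by (simp add: distinct_map)
  have h3: "\<exists>s. ig_arc f (map g [0..<m] ! k) s (map g [0..<m] ! ((k + 1) mod m))" if k: "k < m" for k
  proof -
    have "g ((k+1) mod m) = g (Suc k)"
    proof (cases "k+1 < m")
      case True then show ?thesis by simp
    next
      case False then have "k+1 = m" using k by simp
      then show ?thesis using g by simp
    qed
    moreover have "(k + 1) mod m < m" using g by simp
    ultimately show ?thesis
      using g(3) k unfolding Rel_def by auto
  qed
  have "has_circuit f m"
    unfolding has_circuit_def using h1 h2 h3 by blast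
  then show False using no_circuit m2 by auto
qed

lemma flipL:
  assumes pos_loop_neg: "\<forall>i. ig_arc f i 1 i \<longrightarrow> ig_arc f i (-1) i"
    and reach: "\<forall>i. \<exists>j. ig_arc f j (-1) j \<and> ig_reachable f j i"
  shows "\<exists>z. f (z(n:=b)) n = (\<not> b)"
proof (cases "ig_arc f n (-1) n")
  case True
  then obtain x0 where "jac f n n x0 = -1" unfolding ig_arc_def by auto
  then show ?thesis using jac_loop[of f n x0 b] by blast
next
  case False
  then have nl: "\<not> ig_arc f n 1 n" using pos_loop_neg by blast
  have ind: "f (z(n:=b')) n = f z n" for z b'
  proof -
    have e: "f (z(n:=True)) n = f (z(n:=False)) n" using no_loop_indep[OF nl False, of z] .
    have g: "f (z(n:=c)) n = f (z(n:=d)) n" for c d using e by (cases c; cases d) simp_all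
    show ?thesis using g[of b' "z n"] by simp
  qed
  obtain j where j: "ig_arc f j (-1) j" "ig_reachable f j n" using reach by blast
  have "\<exists>a s. ig_arc f a s n"
    using j(2) unfolding ig_reachable_def by (blast elim: tranclp.cases)
  then obtain a s where as: "ig_arc f a s n" by blast
  have "a \<noteq> n"
  proof
    assume "a = n"
    moreover have "s = -1 \<or> s = 1" using as unfolding ig_arc_def by blast
    ultimately show False using as False nl by blast
  qed
  from as obtain x1 where x1: "jac f n a x1 = s" unfolding ig_arc_def by auto
  have "f (flip x1 a) n \<noteq> f x1 n"
  proof
    assume "f (flip x1 a) n = f x1 n"
    then have "jac f n a x1 = 0" unfolding jac_def by simp
    moreover have "s \<in> {-1,1}" using as unfolding ig_arc_def by blast
    ultimately show False using x1 by auto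
  qed
  then have "f (flip x1 a) n = (\<not> b) \<or> f x1 n = (\<not> b)" by blast
  then show ?thesis
  proof
    assume "f (flip x1 a) n = (\<not> b)" then show ?thesis using ind[of "flip x1 a" b] by blast
  next
    assume "f x1 n = (\<not> b)" then show ?thesis using ind[of x1 b] by blast
  qed
qed

lemma main:
  assumes no_circuit: "\<forall>r\<ge>2. \<not> has_circuit f r"
    and pos_loop_neg: "\<forall>i. ig_arc f i 1 i \<longrightarrow> ig_arc f i (-1) i"
    and reach: "\<forall>i. \<exists>j. ig_arc f j (-1) j \<and> ig_reachable f j i"
  shows "closedS f (S::'n::finite set) \<longrightarrow> (\<forall>x y. (\<forall>k. k\<notin>S \<longrightarrow> x k = y k) \<longrightarrow> (stepS f S)\<^sup>*\<^sup>* x y)"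
proof -
  have fin: "finite S" by simp
  have wf: "wf ((Rel f)\<inverse>)"
    using finite_acyclic_wf[of "(Rel f)\<inverse>"] acyc[OF no_circuit] by (simp add: acyclic_converse)
  show ?thesis using fin
  proof (induction S rule: finite_psubset_induct)
    case (psubset S)
    show ?case
    proof (intro impI allI)
      fix x y :: "'n \<Rightarrow> bool" assume cl: "closedS f S" and ag: "\<forall>k. k \<notin> S \<longrightarrow> x k = y k"
      show "(stepS f S)\<^sup>*\<^sup>* x y"
      proof (cases "S = {}")
        case True
        then have "x = y" using ag by auto
        then show ?thesis by simp
      next
        case False
        then obtain n0 where "n0 \<in> S" by blast
        then obtain n where n: "n \<in> S" and sink: "\<forall>m. (m, n) \<in> (Rel f)\<inverse> \<longrightarrow> m \<notin> S"
          using wf unfolding wf_eq_minimal by metis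
        define S' where "S' = S - {n}"
        have sub: "S' \<subset> S" using n unfolding S'_def by auto
        have cl': "closedS f S'" unfolding closedS_def S'_def
        proof (intro ballI allI impI)
          fix i a assume i: "i \<in> S - {n}" and r: "(a,i) \<in> Rel f"
          have "a \<in> S" using cl i r unfolding closedS_def by auto
          moreover have "a \<noteq> n" using sink i r by auto
          ultimately show "a \<in> S - {n}" by auto
        qed
        have IH: "\<And>u v :: 'n \<Rightarrow> bool. \<forall>k. k \<notin> S' \<longrightarrow> u k = v k \<Longrightarrow> (stepS f S)\<^sup>*\<^sup>* u v"
        proof -
          fix u v :: "'n \<Rightarrow> bool" assume "\<forall>k. k \<notin> S' \<longrightarrow> u k = v k"
          then have "(stepS f S')\<^sup>*\<^sup>* u v" using psubset.IH[OF sub] cl' by blast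
          then show "(stepS f S)\<^sup>*\<^sup>* u v"
            by (rule rtranclp_mono'[rotated]) (use sub in \<open>auto simp: stepS_def\<close>)
        qed
        show ?thesis
        proof (cases "x n = y n")
          case True
          then show ?thesis using ag IH unfolding S'_def by auto
        next
          case False
          obtain z where z: "f (z(n:=x n)) n = (\<not> x n)"
            using flipL[OF pos_loop_neg reach] by blast
          define w where "w = (\<lambda>k. if k \<in> S' then z k else x k)"
          have nS': "n \<notin> S'" unfolding S'_def by auto
          have "f w n = f (z(n:=x n)) n"
          proof (rule dep[of w "z(n:=x n)" f n], intro allI impI)
            fix a s assume d: "w a \<noteq> (z(n:=x n)) a"
            have "a \<notin> S" using d nS' unfolding w_def S'_def by (auto split: if_splits)
            then have "a \<noteq> n" using n by auto
            show "\<not> ig_arc f a s n"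
            proof
              assume "ig_arc f a s n"
              then have "(a,n) \<in> Rel f" using \<open>a \<noteq> n\<close> unfolding Rel_def by auto
              then show False using cl n \<open>a \<notin> S\<close> unfolding closedS_def by auto
            qed
          qed
          then have fw: "f w n = y n" using z False by auto
          have s1: "(stepS f S)\<^sup>*\<^sup>* x w" by (rule IH) (auto simp: w_def)
          have s2: "stepS f S w (Fupd f n w)" using n unfolding stepS_def by auto
          have s3: "(stepS f S)\<^sup>*\<^sup>* (Fupd f n w) y"
            by (rule IH) (use ag fw nS' in \<open>auto simp: Fupd_def w_def S'_def\<close>)
          show ?thesis using s1 s2 s3 by (meson rtranclp.rtrancl_into_rtrancl rtranclp_trans)
        qed
      qed
    qed
  qed
qed

theorem theorem2:
  fixes f :: "('n::finite \<Rightarrow> bool) \<Rightarrow> ('n \<Rightarrow> bool)"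
  assumes no_circuit: "\<forall>r\<ge>2. \<not> has_circuit f r"
    and pos_loop_neg: "\<forall>i. ig_arc f i 1 i \<longrightarrow> ig_arc f i (-1) i"
    and reach: "\<forall>i. \<exists>j. ig_arc f j (-1) j \<and> ig_reachable f j i"
  shows "async_strongly_connected f"
  unfolding async_strongly_connected_def
proof (intro allI)
  fix x y :: "'n \<Rightarrow> bool"
  have "closedS f UNIV" unfolding closedS_def by auto
  then have "(stepS f UNIV)\<^sup>*\<^sup>* x y" using main[OF assms, of UNIV] by auto
  then show "(async_arc f)\<^sup>*\<^sup>* x y"
    by (rule rtranclp_mono'[rotated]) (auto simp: stepS_def async_arc_def)
qed

end
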